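(* Let $\mathbf{H}$ be a CQH-Hermitian space whose anti-holomorphic cohomology groups $H^{(0,k)}$ are all finite-dimensional. Then the following are equivalent: (1) $\sigma_P\big(\Delta_{\overline{\partial}}:\Omega^{(0,\bullet)}\to\Omega^{(0,\bullet)}\big)\to\infty$; (2) $\sigma_P\big(\overline{\partial}\,\overline{\partial}^\dagger:\overline{\partial}\Omega^{(0,\bullet)}\to\overline{\partial}\Omega^{(0,\bullet)}\big)\to\infty$; (3) $\sigma_P\big(\overline{\partial}^\dagger\overline{\partial}:\overline{\partial}^\dagger\Omega^{(0,\bullet)}\to\overline{\partial}^\dagger\Omega^{(0,\bullet)}\big)\to\infty$.
   Context: CQH-Hermitian space. The following data are given: - $A$ and $H$ are compact matrix quantum group algebras (finitely generated cosemisimple Hopf $*$-algebras with faithful positive Haar state $h$), $A$ is a domain, $\pi:A\to H$ is a surjective Hopf $*$-map, and $B=A^{\mathrm{co}(H)}$. - $\Omega^\bullet$ is a left $A$-covariant differential $*$-calculus over $B$ of total degree $2n$, finite-dimensional in the category of covariant $B$-bimodules $F$ with $FB^+\subseteq B^+F$. - $\Omega^{(\bullet,\bullet)}$ is a covariant complex structure with $d=\partial+\overline{\partial}$. - $\sigma$ is a central, real, coinvariant $(1,1)$-form such that $L^{n-k}=(\sigma\wedge-)^{n-k}:\Omega^k\to\Omega^{2n-k}$ is bijective for $1\le k<n$. - The Hodge map is $*_\sigma(L^j\omega)=(-1)^{k(k+1)/2}i^{a-b}\frac{j!}{(n-j-k)!}L^{n-j-k}\omega$ for $\omega$ primitive of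 type $(a,b)$, $k=a+b$. - The metric $g_\sigma(\omega,\nu)=*_\sigma( *_\sigma(\omega^* )\wedge\nu)$ is positive definite, and $*_\sigma|_{\Omega^{2n}}:\Omega^{2n}\to B$ is an isomorphism with closed integral $h\circ*_\sigma$. - $\overline{\partial}^\dagger$ is the adjoint for $\langle\omega,\nu\rangle=h(g_\sigma(\omega,\nu))$, and $\Delta_{\overline{\partial}}=(\overline{\partial}+\overline{\partial}^\dagger)^2$. These operators are diagonalisable. - $H^{(0,k)}$ is the $k$-th cohomology of $(\Omega^{(0,\bullet)},\overline{\partial})$. - For a diagonalisable operator $T$, $\sigma_P(T)\to\infty$ means its eigenvalues, counted with multiplicity, tend to infinity. *)

theory Defs
  imports Complex_Main
begin

text \<open>Abstract (linear-algebraic) rendering of the anti-holomorphic part of a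
CQH-Hermitian space.  The total space of anti-holomorphic forms
Omega^(0,*) is the complex vector space 'v (scalar multiplication scl),
graded by the subspaces Om k = Omega^(0,k), k = 0..n.\<close>

definition fin_dim :: "(complex \<Rightarrow> 'v::ab_group_add \<Rightarrow> 'v) \<Rightarrow> 'v set \<Rightarrow> bool" where
  "fin_dim scl W \<longleftrightarrow> (\<exists>B. finite B \<and> W \<subseteq> module.span scl B)"

definition eigvecs :: "(complex \<Rightarrow> 'v::ab_group_add \<Rightarrow> 'v) \<Rightarrow> 'v set \<Rightarrow> ('v \<Rightarrow> 'v) \<Rightarrow> complex \<Rightarrow> 'v set" where
  "eigvecs scl W T lam = {v \<in> W. v \<noteq> 0 \<and> T v = scl lam v}"

definition diagonalisable_on :: "(complex \<Rightarrow> 'v::ab_group_add \<Rightarrow> 'v) \<Rightarrow> 'v set \<Rightarrow> ('v \<Rightarrow> 'v) \<Rightarrow> bool" where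
  "diagonalisable_on scl W T \<longleftrightarrow>
     T ` W \<subseteq> W \<and> W \<subseteq> module.span scl (\<Union>lam. eigvecs scl W T lam)"

text \<open>sigma_P(T : W -> W) tends to infinity: the eigenvalues counted with
multiplicity tend to infinity, i.e. for every bound C the eigenvectors with
eigenvalue of modulus at most C span a finite-dimensional space.\<close>
definition spec_to_infinity :: "(complex \<Rightarrow> 'v::ab_group_add \<Rightarrow> 'v) \<Rightarrow> 'v set \<Rightarrow> ('v \<Rightarrow> 'v) \<Rightarrow> bool" where
  "spec_to_infinity scl W T \<longleftrightarrow>
     (\<forall>C::real. fin_dim scl (module.span scl (\<Union>lam \<in> {lam. cmod lam \<le> C}. eigvecs scl W T lam)))"

text \<open>Anti-holomorphic Hodge-de Rham data of a CQH-Hermitian space: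
 graded complex vector space, positive definite Hermitian inner product
 (conjugate-linear in the first slot) for which the degrees are orthogonal,
 the differential dbar (degree +1, dbar o dbar = 0) and its adjoint dadj.\<close>
definition dbar_hermitian_complex ::
  "(complex \<Rightarrow> 'v::ab_group_add \<Rightarrow> 'v) \<Rightarrow> ('v \<Rightarrow> 'v \<Rightarrow> complex) \<Rightarrow> nat \<Rightarrow> (nat \<Rightarrow> 'v set)
   \<Rightarrow> ('v \<Rightarrow> 'v) \<Rightarrow> ('v \<Rightarrow> 'v) \<Rightarrow> bool" where
  "dbar_hermitian_complex scl ip n Om dbar dadj \<longleftrightarrow>
     Vector_Spaces.vector_space scl \<and>
     (\<forall>x y z. ip x (y + z) = ip x y + ip x z) \<and>
     (\<forall>x y c. ip x (scl c y) = c * ip x y) \<and>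
     (\<forall>x y. ip y x = cnj (ip x y)) \<and>
     (\<forall>x. x \<noteq> 0 \<longrightarrow> (\<exists>r::real. r > 0 \<and> ip x x = complex_of_real r)) \<and>
     (\<forall>k. module.subspace scl (Om k)) \<and>
     (\<forall>k. n < k \<longrightarrow> Om k = {0}) \<and>
     UNIV = module.span scl (\<Union>k \<in> {..n}. Om k) \<and>
     (\<forall>f. (\<forall>k. f k \<in> Om k) \<longrightarrow> (\<Sum>k\<le>n. f k) = 0 \<longrightarrow> (\<forall>k\<le>n. f k = 0)) \<and>
     (\<forall>j k x y. j \<noteq> k \<longrightarrow> x \<in> Om j \<longrightarrow> y \<in> Om k \<longrightarrow> ip x y = 0) \<and>
     Vector_Spaces.linear scl scl dbar \<and>
     (\<forall>k. dbar ` Om k \<subseteq> Om (Suc k)) \<and>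
     (\<forall>x. dbar (dbar x) = 0) \<and>
     Vector_Spaces.linear scl scl dadj \<and>
     (\<forall>x y. ip (dbar x) y = ip x (dadj y))"

definition dbar_laplacian :: "('v::ab_group_add \<Rightarrow> 'v) \<Rightarrow> ('v \<Rightarrow> 'v) \<Rightarrow> 'v \<Rightarrow> 'v" where
  "dbar_laplacian dbar dadj x = (dbar (dbar x + dadj x) + dadj (dbar x + dadj x))"

text \<open>H^(0,k) = ker(dbar on Om k) / dbar(Om (k-1)) (with Om(-1) = 0) is
finite-dimensional: the cocycles lie in the span of finitely many vectors
together with the coboundaries.\<close>
definition cohom_fin_dim ::
  "(complex \<Rightarrow> 'v::ab_group_add \<Rightarrow> 'v) \<Rightarrow> (nat \<Rightarrow> 'v set) \<Rightarrow> ('v \<Rightarrow> 'v) \<Rightarrow> nat \<Rightarrow> bool" where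
  "cohom_fin_dim scl Om dbar k \<longleftrightarrow>
     (\<exists>B. finite B \<and>
        {v \<in> Om k. dbar v = 0} \<subseteq>
          module.span scl (B \<union> {dbar w | w j. k = Suc j \<and> w \<in> Om j}))"

end

theory Submission
  imports Defs
begin

context
  fixes scl :: "complex \<Rightarrow> 'v::ab_group_add \<Rightarrow> 'v"
    and ip :: "'v \<Rightarrow> 'v \<Rightarrow> complex"
    and n :: nat and Om :: "nat \<Rightarrow> 'v set"
    and dbar dadj :: "'v \<Rightarrow> 'v"
  assumes herm: "dbar_hermitian_complex scl ip n Om dbar dadj"
begin

lemma vs: "vector_space scl" using herm unfolding dbar_hermitian_complex_def by (elim conjE) assumption
interpretation V: vector_space scl by (rule vs)
lemma lin_d: "Vector_Spaces.linear scl scl dbar" using herm unfolding dbar_hermitian_complex_def by (elim conjE) assumption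
lemma lin_a: "Vector_Spaces.linear scl scl dadj" using herm unfolding dbar_hermitian_complex_def by (elim conjE) assumption
interpretation D: Vector_Spaces.linear scl scl dbar by (rule lin_d)
interpretation A: Vector_Spaces.linear scl scl dadj by (rule lin_a)

lemma ip_add[rule_format]: "\<forall>x y z. ip x (y + z) = ip x y + ip x z" using herm unfolding dbar_hermitian_complex_def by (elim conjE) assumption
lemma ip_scl[rule_format]: "\<forall>x y c. ip x (scl c y) = c * ip x y" using herm unfolding dbar_hermitian_complex_def by (elim conjE) assumption
lemma ip_cnj[rule_format]: "\<forall>x y. ip y x = cnj (ip x y)" using herm unfolding dbar_hermitian_complex_def by (elim conjE) assumption
lemma ip_pos[rule_format]: "\<forall>x. x \<noteq> 0 \<longrightarrow> (\<exists>r::real. r > 0 \<and> ip x x = complex_of_real r)"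
  using herm unfolding dbar_hermitian_complex_def by (elim conjE) assumption
lemma ip_adj[rule_format]: "\<forall>x y. ip (dbar x) y = ip x (dadj y)" using herm unfolding dbar_hermitian_complex_def by (elim conjE) assumption
lemma Om_sub[rule_format]: "\<forall>k. V.subspace (Om k)" using herm unfolding dbar_hermitian_complex_def by (elim conjE) assumption
lemma Om_big[rule_format]: "\<forall>k. n < k \<longrightarrow> Om k = {0}" using herm unfolding dbar_hermitian_complex_def by (elim conjE) assumption
lemma Om_span: "UNIV = V.span (\<Union>k \<in> {..n}. Om k)" using herm unfolding dbar_hermitian_complex_def by (elim conjE) assumption
lemma Om_dir0: "\<forall>f. (\<forall>k. f k \<in> Om k) \<longrightarrow> (\<Sum>k\<le>n. f k) = 0 \<longrightarrow> (\<forall>k\<le>n. f k = 0)"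
  using herm unfolding dbar_hermitian_complex_def by (elim conjE) assumption
lemma Om_dir: "(\<And>k. f k \<in> Om k) \<Longrightarrow> (\<Sum>k\<le>n. f k) = 0 \<Longrightarrow> k \<le> n \<Longrightarrow> f k = 0"
  using Om_dir0 by blast
lemma d_Om0: "\<forall>k. dbar ` Om k \<subseteq> Om (Suc k)" using herm unfolding dbar_hermitian_complex_def by (elim conjE) assumption
lemma d_Om: "x \<in> Om k \<Longrightarrow> dbar x \<in> Om (Suc k)" using d_Om0 by blast
lemma dd0[simp, rule_format]: "\<forall>x. dbar (dbar x) = 0" using herm unfolding dbar_hermitian_complex_def by (elim conjE) assumption

lemma ip_0r[simp]: "ip x 0 = 0"
  using ip_scl[of x 0 0] by simp
lemma ip_0l[simp]: "ip 0 y = 0"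
  using ip_cnj[of 0 y] by simp
lemma ip_self: "ip x x = 0 \<Longrightarrow> x = 0"
  using ip_pos[of x] by force
lemma ip_nonneg: "\<exists>r::real. r \<ge> 0 \<and> ip x x = complex_of_real r"
  using ip_pos[of x] by (cases "x = 0") force+
lemma adj2: "ip (dadj x) y = ip x (dbar y)"
  by (metis ip_adj ip_cnj complex_cnj_cnj)
lemma adj3: "ip x (dadj y) = ip (dbar x) y"
  by (simp add: ip_adj)
lemma aa0[simp]: "dadj (dadj y) = 0"
proof -
  define z where "z = dadj (dadj y)"
  have "ip z z = ip (dbar (dbar z)) y" unfolding z_def
    by (metis adj3)
  then show ?thesis unfolding z_def using ip_self by simp
qed
lemma lap: "dbar_laplacian dbar dadj v = dbar (dadj v) + dadj (dbar v)"
  unfolding dbar_laplacian_def by (simp add: D.add A.add)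

lemma harm:
  assumes "dbar (dadj v) + dadj (dbar v) = 0"
  shows "dbar v = 0 \<and> dadj v = 0"
proof -
  have "0 = ip v (dbar (dadj v) + dadj (dbar v))" using assms by simp
  also have "\<dots> = ip (dadj v) (dadj v) + ip (dbar v) (dbar v)"
    using adj2[of v "dadj v"] adj3[of v "dbar v"] by (simp add: ip_add)
  finally have e: "ip (dadj v) (dadj v) + ip (dbar v) (dbar v) = 0" by simp
  obtain r1 where r1: "r1 \<ge> 0" "ip (dadj v) (dadj v) = complex_of_real r1" using ip_nonneg by blast
  obtain r2 where r2: "r2 \<ge> 0" "ip (dbar v) (dbar v) = complex_of_real r2" using ip_nonneg by blast
  from e r1 r2 have "r1 + r2 = 0" by (metis of_real_add of_real_eq_0_iff)
  with r1 r2 have "r1 = 0" "r2 = 0" by auto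
  with r1 r2 show ?thesis using ip_self by auto
qed

lemma orth:
  assumes "dbar h = 0" "dadj h = 0" "h = dbar a + dadj c"
  shows "h = 0"
proof -
  have "ip h h = ip h (dbar a) + ip h (dadj c)" using assms(3) by (metis ip_add)
  also have "\<dots> = ip (dadj h) a + ip (dbar h) c" using adj2[of h a] adj3[of h c] by simp
  also have "\<dots> = 0" using assms(1,2) by simp
  finally show ?thesis by (rule ip_self)
qed


lemma fin_dim_span: "fin_dim scl (V.span X) \<longleftrightarrow> (\<exists>B. finite B \<and> X \<subseteq> V.span B)"
proof
  assume "fin_dim scl (V.span X)" then show "\<exists>B. finite B \<and> X \<subseteq> V.span B"
    unfolding fin_dim_def using V.span_superset by blast
next
  assume "\<exists>B. finite B \<and> X \<subseteq> V.span B"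
  then obtain B where "finite B" "X \<subseteq> V.span B" by blast
  then have "V.span X \<subseteq> V.span B" by (metis V.span_mono V.span_span)
  then show "fin_dim scl (V.span X)" unfolding fin_dim_def using \<open>finite B\<close> by blast
qed

lemma spec_iff: "spec_to_infinity scl W T \<longleftrightarrow> (\<forall>C. \<exists>B. finite B \<and>
   (\<Union>lam \<in> {lam. cmod lam \<le> C}. eigvecs scl W T lam) \<subseteq> V.span B)"
  unfolding spec_to_infinity_def fin_dim_span ..

lemma e2_e1: "eigvecs scl (range dbar) (dbar \<circ> dadj) lam \<subseteq> eigvecs scl UNIV (dbar_laplacian dbar dadj) lam"
  unfolding eigvecs_def by (auto simp: lap)

lemma e3_e1: "eigvecs scl (range dadj) (dadj \<circ> dbar) lam \<subseteq> eigvecs scl UNIV (dbar_laplacian dbar dadj) lam"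
  unfolding eigvecs_def by (auto simp: lap)

lemma e3_e2:
  assumes "u \<in> eigvecs scl (range dadj) (dadj \<circ> dbar) lam"
  shows "dbar u \<in> eigvecs scl (range dbar) (dbar \<circ> dadj) lam \<and> lam \<noteq> 0 \<and> u = scl (1/lam) (dadj (dbar u))"
proof -
  from assms obtain w where u: "u = dadj w" "u \<noteq> 0" "dadj (dbar u) = scl lam u"
    unfolding eigvecs_def by auto
  have "lam \<noteq> 0"
  proof
    assume l: "lam = 0"
    then have "ip (dbar u) (dbar u) = 0" using u(3) adj3[of u "dbar u"] by simp
    then have "dbar u = 0" by (rule ip_self)
    then have "ip u u = 0" using u(1) adj2[of w u] by simp
    then show False using u(2) ip_self by blast
  qed
  moreover have "dbar u \<noteq> 0" using u(2,3) \<open>lam \<noteq> 0\<close> by auto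
  moreover have "dbar (dadj (dbar u)) = scl lam (dbar u)" using u(3) by (simp add: D.scale)
  moreover have "u = scl (1/lam) (dadj (dbar u))" using u(3) \<open>lam \<noteq> 0\<close> by simp
  ultimately show ?thesis unfolding eigvecs_def by auto
qed

lemma e2_e3:
  assumes "v \<in> eigvecs scl (range dbar) (dbar \<circ> dadj) lam"
  shows "dadj v \<in> eigvecs scl (range dadj) (dadj \<circ> dbar) lam \<and> lam \<noteq> 0 \<and> v = scl (1/lam) (dbar (dadj v))"
proof -
  from assms obtain w where u: "v = dbar w" "v \<noteq> 0" "dbar (dadj v) = scl lam v"
    unfolding eigvecs_def by auto
  have "lam \<noteq> 0"
  proof
    assume l: "lam = 0"
    then have "ip (dadj v) (dadj v) = 0" using u(3) adj2[of v "dadj v"] by simp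
    then have "dadj v = 0" by (rule ip_self)
    then have "ip v v = 0" using u(1) ip_adj[of w v] by simp
    then show False using u(2) ip_self by blast
  qed
  moreover have "dadj v \<noteq> 0" using u(2,3) \<open>lam \<noteq> 0\<close> by auto
  moreover have "dadj (dbar (dadj v)) = scl lam (dadj v)" using u(3) by (simp add: A.scale)
  moreover have "v = scl (1/lam) (dbar (dadj v))" using u(3) \<open>lam \<noteq> 0\<close> by simp
  ultimately show ?thesis unfolding eigvecs_def by auto
qed

lemma imp12:
  "spec_to_infinity scl UNIV (dbar_laplacian dbar dadj) \<Longrightarrow> spec_to_infinity scl (range dbar) (dbar \<circ> dadj)"
  unfolding spec_iff using e2_e1 by (meson SUP_mono' order_trans)

lemma imp13:
  "spec_to_infinity scl UNIV (dbar_laplacian dbar dadj) \<Longrightarrow> spec_to_infinity scl (range dadj) (dadj \<circ> dbar)"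
  unfolding spec_iff using e3_e1 by (meson SUP_mono' order_trans)

lemma imp23:
  assumes "spec_to_infinity scl (range dbar) (dbar \<circ> dadj)"
  shows "spec_to_infinity scl (range dadj) (dadj \<circ> dbar)"
  unfolding spec_iff
proof
  fix C
  from assms obtain B where B: "finite B" "(\<Union>lam \<in> {lam. cmod lam \<le> C}. eigvecs scl (range dbar) (dbar \<circ> dadj) lam) \<subseteq> V.span B"
    unfolding spec_iff by blast
  have "(\<Union>lam \<in> {lam. cmod lam \<le> C}. eigvecs scl (range dadj) (dadj \<circ> dbar) lam) \<subseteq> V.span (dadj ` B)"
  proof (clarsimp)
    fix lam u assume l: "cmod lam \<le> C" and u: "u \<in> eigvecs scl (range dadj) (dadj \<circ> dbar) lam"
    from e3_e2[OF u] have "dbar u \<in> V.span B" "u = scl (1/lam) (dadj (dbar u))" using B(2) l by auto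
    then have "dadj (dbar u) \<in> V.span (dadj ` B)" by (simp add: A.span_image)
    then show "u \<in> V.span (dadj ` B)" using \<open>u = _\<close> by (metis V.span_scale)
  qed
  then show "\<exists>B. finite B \<and> (\<Union>lam \<in> {lam. cmod lam \<le> C}. eigvecs scl (range dadj) (dadj \<circ> dbar) lam) \<subseteq> V.span B"
    using B(1) by blast
qed

lemma imp32:
  assumes "spec_to_infinity scl (range dadj) (dadj \<circ> dbar)"
  shows "spec_to_infinity scl (range dbar) (dbar \<circ> dadj)"
  unfolding spec_iff
proof
  fix C
  from assms obtain B where B: "finite B" "(\<Union>lam \<in> {lam. cmod lam \<le> C}. eigvecs scl (range dadj) (dadj \<circ> dbar) lam) \<subseteq> V.span B"
    unfolding spec_iff by blast
  have "(\<Union>lam \<in> {lam. cmod lam \<le> C}. eigvecs scl (range dbar) (dbar \<circ> dadj) lam) \<subseteq> V.span (dbar ` B)"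
  proof (clarsimp)
    fix lam u assume l: "cmod lam \<le> C" and u: "u \<in> eigvecs scl (range dbar) (dbar \<circ> dadj) lam"
    from e2_e3[OF u] have "dadj u \<in> V.span B" "u = scl (1/lam) (dbar (dadj u))" using B(2) l by auto
    then have "dbar (dadj u) \<in> V.span (dbar ` B)" by (simp add: D.span_image)
    then show "u \<in> V.span (dbar ` B)" using \<open>u = _\<close> by (metis V.span_scale)
  qed
  then show "\<exists>B. finite B \<and> (\<Union>lam \<in> {lam. cmod lam \<le> C}. eigvecs scl (range dbar) (dbar \<circ> dadj) lam) \<subseteq> V.span B"
    using B(1) by blast
qed


lemma decomp: "\<exists>f. (\<forall>k. f k \<in> Om k) \<and> v = (\<Sum>k\<le>n. f k)"
proof -
  define S where "S = {v. \<exists>f. (\<forall>k. f k \<in> Om k) \<and> v = (\<Sum>k\<le>n. f k)}"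
  have sub: "V.subspace S"
  proof (rule V.subspaceI)
    show "0 \<in> S" unfolding S_def
      by (rule CollectI, rule exI[of _ "\<lambda>_. 0"]) (simp add: V.subspace_0[OF Om_sub])
  next
    fix x y assume "x \<in> S" "y \<in> S"
    then obtain f g where "\<forall>k. f k \<in> Om k" "x = (\<Sum>k\<le>n. f k)" "\<forall>k. g k \<in> Om k" "y = (\<Sum>k\<le>n. g k)"
      unfolding S_def by blast
    then show "x + y \<in> S" unfolding S_def
      by (intro CollectI exI[of _ "\<lambda>k. f k + g k"]) (simp add: sum.distrib V.subspace_add[OF Om_sub])
  next
    fix c x assume "x \<in> S"
    then obtain f where "\<forall>k. f k \<in> Om k" "x = (\<Sum>k\<le>n. f k)"
      unfolding S_def by blast
    then show "scl c x \<in> S" unfolding S_def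
      by (intro CollectI exI[of _ "\<lambda>k. scl c (f k)"]) (simp add: V.scale_sum_right V.subspace_scale[OF Om_sub])
  qed
  have "(\<Union>k \<in> {..n}. Om k) \<subseteq> S"
  proof clarsimp
    fix j x assume j: "j \<le> n" and x: "x \<in> Om j"
    show "x \<in> S" unfolding S_def
    proof (intro CollectI exI[of _ "\<lambda>k. if k = j then x else 0"] conjI allI)
      fix k show "(if k = j then x else 0) \<in> Om k" using x V.subspace_0[OF Om_sub] by auto
    next
      show "x = (\<Sum>k\<le>n. if k = j then x else 0)" using j by (simp add: sum.delta)
    qed
  qed
  then have "V.span (\<Union>k \<in> {..n}. Om k) \<subseteq> S" using sub by (rule V.span_minimal)
  then have "v \<in> S" using Om_span by auto
  then show ?thesis unfolding S_def by blast
qed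

lemma ker_fin:
  assumes cohom: "\<forall>k. cohom_fin_dim scl Om dbar k"
  shows "\<exists>BB. finite BB \<and> (\<forall>v. dbar v = 0 \<longrightarrow> v \<in> V.span (BB \<union> range dbar))"
proof -
  from cohom have "\<forall>k. \<exists>B. finite B \<and> {v \<in> Om k. dbar v = 0} \<subseteq> V.span (B \<union> {dbar w | w j. k = Suc j \<and> w \<in> Om j})"
    unfolding cohom_fin_dim_def by blast
  then have "\<exists>Bf. \<forall>k. finite (Bf k) \<and> {v \<in> Om k. dbar v = 0} \<subseteq> V.span (Bf k \<union> {dbar w | w j. k = Suc j \<and> w \<in> Om j})"
    by (rule choice)
  then obtain Bf where Bf0: "\<forall>k. finite (Bf k) \<and> {v \<in> Om k. dbar v = 0} \<subseteq> V.span (Bf k \<union> {dbar w | w j. k = Suc j \<and> w \<in> Om j})"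
    by blast
  have Bf: "\<And>k. finite (Bf k)"
    "\<And>k. {v \<in> Om k. dbar v = 0} \<subseteq> V.span (Bf k \<union> {dbar w | w j. k = Suc j \<and> w \<in> Om j})"
    using Bf0 by auto
  define BB where "BB = (\<Union>k\<le>n. Bf k)"
  have "finite BB" unfolding BB_def using Bf(1) by auto
  moreover have "v \<in> V.span (BB \<union> range dbar)" if v0: "dbar v = 0" for v
  proof -
    obtain f where f: "\<And>k. f k \<in> Om k" "v = (\<Sum>k\<le>n. f k)" using decomp by blast
    define g where "g k = (if k = 0 then 0 else dbar (f (k - 1)))" for k
    have g: "g k \<in> Om k" for k
      using V.subspace_0[OF Om_sub] d_Om[OF f(1)[of "k - 1"]] by (cases k) (auto simp: g_def)
    have "Om (Suc n) = {0}" by (rule Om_big) simp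
    then have fn: "dbar (f n) = 0" using d_Om[OF f(1)[of n]] by simp
    have "(\<Sum>k\<le>Suc n. g k) = (\<Sum>k\<le>n. dbar (f k))"
      by (subst sum.atMost_Suc_shift) (simp add: g_def)
    also have "\<dots> = dbar v" using f(2) by (simp add: D.sum)
    finally have "(\<Sum>k\<le>n. g k) = 0" using v0 fn by (simp add: g_def)
    then have gz: "k \<le> n \<Longrightarrow> g k = 0" for k using Om_dir[of g] g by blast
    have fk: "dbar (f k) = 0" if "k \<le> n" for k
    proof (cases "k = n")
      case True then show ?thesis using fn by simp
    next
      case False then show ?thesis using gz[of "Suc k"] that by (simp add: g_def)
    qed
    have "f k \<in> V.span (BB \<union> range dbar)" if "k \<le> n" for k
    proof -
      have "f k \<in> V.span (Bf k \<union> {dbar w | w j. k = Suc j \<and> w \<in> Om j})"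
        using Bf(2)[of k] f(1)[of k] fk[OF that] by blast
      moreover have "Bf k \<subseteq> BB" using that unfolding BB_def by blast
      then have "Bf k \<union> {dbar w | w j. k = Suc j \<and> w \<in> Om j} \<subseteq> BB \<union> range dbar"
        by blast
      ultimately show ?thesis using V.span_mono by blast
    qed
    then show ?thesis unfolding f(2) by (intro V.span_sum) auto
  qed
  ultimately show ?thesis by blast
qed


lemma harm_fin:
  assumes diag_lap: "diagonalisable_on scl UNIV (dbar_laplacian dbar dadj)"
    and cohom: "\<forall>k. cohom_fin_dim scl Om dbar k"
  shows "\<exists>Bh. finite Bh \<and> (\<forall>v. dbar v = 0 \<and> dadj v = 0 \<longrightarrow> v \<in> V.span Bh)"
proof -
  define Hm where "Hm = {h. dbar h = 0 \<and> dadj h = 0}"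
  define R where "R = {x + y | x y. x \<in> range dbar \<and> y \<in> range dadj}"
  have subHm: "V.subspace Hm" unfolding Hm_def
    by (rule V.subspaceI) (auto simp: D.add A.add D.scale A.scale)
  have subR: "V.subspace R" unfolding R_def
    by (rule V.subspace_sums[OF D.subspace_image[OF V.subspace_UNIV] A.subspace_image[OF V.subspace_UNIV]])
  have eig: "eigvecs scl UNIV (dbar_laplacian dbar dadj) lam \<subseteq> Hm \<union> R" for lam
  proof
    fix v assume "v \<in> eigvecs scl UNIV (dbar_laplacian dbar dadj) lam"
    then have v: "dbar (dadj v) + dadj (dbar v) = scl lam v" unfolding eigvecs_def by (simp add: lap)
    show "v \<in> Hm \<union> R"
    proof (cases "lam = 0")
      case True then show ?thesis using harm[of v] v unfolding Hm_def by simp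
    next
      case False
      have "v = scl (1/lam) (dbar (dadj v) + dadj (dbar v))" using v False by simp
      also have "\<dots> = dbar (scl (1/lam) (dadj v)) + dadj (scl (1/lam) (dbar v))"
        by (simp add: D.scale A.scale V.scale_right_distrib)
      finally show ?thesis unfolding R_def by blast
    qed
  qed
  have all: "\<exists>h. h \<in> Hm \<and> x - h \<in> R" for x
  proof -
    have "x \<in> V.span (\<Union>lam. eigvecs scl UNIV (dbar_laplacian dbar dadj) lam)"
      using diag_lap unfolding diagonalisable_on_def by blast
    also have "\<dots> \<subseteq> V.span (Hm \<union> R)" using eig by (intro V.span_mono) blast
    finally obtain a b where "x = a + b" "a \<in> V.span Hm" "b \<in> V.span R"
      unfolding V.span_Un by blast
    moreover have "V.span Hm = Hm" "V.span R = R" using subHm subR V.span_eq_iff by blast+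
    ultimately have "a \<in> Hm" "x - a \<in> R" by (simp_all add: add_diff_cancel_left')
    then show ?thesis by blast
  qed
  define hb where "hb b = (SOME h. h \<in> Hm \<and> b - h \<in> R)" for b
  have hb: "hb b \<in> Hm" "b - hb b \<in> R" for b
    using someI_ex[OF all[of b]] unfolding hb_def by auto
  obtain BB where BB: "finite BB" "\<And>v. dbar v = 0 \<Longrightarrow> v \<in> V.span (BB \<union> range dbar)"
    using ker_fin[OF cohom] by blast
  define Bh where "Bh = hb ` BB"
  have "v \<in> V.span Bh" if vh: "dbar v = 0" "dadj v = 0" for v
  proof -
    have "BB \<union> range dbar \<subseteq> V.span (Bh \<union> R)"
    proof
      fix x assume "x \<in> BB \<union> range dbar"
      then show "x \<in> V.span (Bh \<union> R)"
      proof
        assume x: "x \<in> BB"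
        have "hb x \<in> V.span (Bh \<union> R)" using x unfolding Bh_def by (intro V.span_base) blast
        moreover have "x - hb x \<in> V.span (Bh \<union> R)" using hb(2)[of x] by (intro V.span_base) blast
        ultimately have "hb x + (x - hb x) \<in> V.span (Bh \<union> R)" by (rule V.span_add)
        then show ?thesis by simp
      next
        assume "x \<in> range dbar"
        then obtain a where "x = dbar a" by blast
        then have "x = dbar a + dadj 0" by simp
        then have "x \<in> R" unfolding R_def by blast
        then show ?thesis by (intro V.span_base) blast
      qed
    qed
    then have "V.span (BB \<union> range dbar) \<subseteq> V.span (Bh \<union> R)" by (metis V.span_mono V.span_span)
    then have "v \<in> V.span (Bh \<union> R)" using BB(2)[OF vh(1)] by blast
    then obtain a r where ar: "v = a + r" "a \<in> V.span Bh" "r \<in> V.span R"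
      unfolding V.span_Un by blast
    have "Bh \<subseteq> Hm" unfolding Bh_def using hb(1) by blast
    then have aH: "a \<in> Hm" using ar(2) subHm V.span_minimal by blast
    have rR: "r \<in> R" using ar(3) subR V.span_eq_iff by blast
    have "r = v - a" using ar(1) by simp
    then have "r \<in> Hm" using aH vh V.subspace_diff[OF subHm] unfolding Hm_def by auto
    with rR have "r = 0" unfolding Hm_def R_def using orth by blast
    then show ?thesis using ar by simp
  qed
  moreover have "finite Bh" unfolding Bh_def using BB(1) by simp
  ultimately show ?thesis by blast
qed

lemma imp231:
  assumes diag_lap: "diagonalisable_on scl UNIV (dbar_laplacian dbar dadj)"
    and cohom: "\<forall>k. cohom_fin_dim scl Om dbar k"
    and s2: "spec_to_infinity scl (range dbar) (dbar \<circ> dadj)"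
    and s3: "spec_to_infinity scl (range dadj) (dadj \<circ> dbar)"
  shows "spec_to_infinity scl UNIV (dbar_laplacian dbar dadj)"
  unfolding spec_iff
proof
  fix C
  obtain Bh where Bh: "finite Bh" "\<And>v. dbar v = 0 \<Longrightarrow> dadj v = 0 \<Longrightarrow> v \<in> V.span Bh"
    using harm_fin[OF diag_lap cohom] by blast
  from s2 obtain B2 where B2: "finite B2" "(\<Union>lam \<in> {lam. cmod lam \<le> C}. eigvecs scl (range dbar) (dbar \<circ> dadj) lam) \<subseteq> V.span B2"
    unfolding spec_iff by blast
  from s3 obtain B3 where B3: "finite B3" "(\<Union>lam \<in> {lam. cmod lam \<le> C}. eigvecs scl (range dadj) (dadj \<circ> dbar) lam) \<subseteq> V.span B3"
    unfolding spec_iff by blast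
  let ?B = "Bh \<union> B2 \<union> B3"
  have "(\<Union>lam \<in> {lam. cmod lam \<le> C}. eigvecs scl UNIV (dbar_laplacian dbar dadj) lam) \<subseteq> V.span ?B"
  proof clarsimp
    fix lam v assume l: "cmod lam \<le> C" and ve: "v \<in> eigvecs scl UNIV (dbar_laplacian dbar dadj) lam"
    then have v: "dbar (dadj v) + dadj (dbar v) = scl lam v" unfolding eigvecs_def by (simp add: lap)
    show "v \<in> V.span ?B"
    proof (cases "lam = 0")
      case True
      then have "v \<in> V.span Bh" using harm[of v] v Bh(2) by simp
      then show ?thesis using V.span_mono[of Bh ?B] by blast
    next
      case False
      define p where "p = dbar (dadj v)"
      define q where "q = dadj (dbar v)"
      have "dbar (dadj p) = dbar (dadj (dbar (dadj v) + dadj (dbar v)))" unfolding p_def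
        by (simp add: D.add A.add)
      then have pe: "dbar (dadj p) = scl lam p" unfolding p_def using v by (simp add: D.scale A.scale)
      have "dadj (dbar q) = dadj (dbar (dbar (dadj v) + dadj (dbar v)))" unfolding q_def
        by (simp add: D.add A.add)
      then have qe: "dadj (dbar q) = scl lam q" unfolding q_def using v by (simp add: D.scale A.scale)
      have pB: "p \<in> V.span ?B"
      proof (cases "p = 0")
        case True then show ?thesis by (simp add: V.span_zero)
      next
        case False
        then have "p \<in> eigvecs scl (range dbar) (dbar \<circ> dadj) lam" using pe unfolding eigvecs_def p_def by auto
        then have "p \<in> V.span B2" using B2(2) l by blast
        then show ?thesis using V.span_mono[of B2 ?B] by blast
      qed
      have qB: "q \<in> V.span ?B"
      proof (cases "q = 0")
        case True then show ?thesis by (simp add: V.span_zero)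
      next
        case False
        then have "q \<in> eigvecs scl (range dadj) (dadj \<circ> dbar) lam" using qe unfolding eigvecs_def q_def by auto
        then have "q \<in> V.span B3" using B3(2) l by blast
        then show ?thesis using V.span_mono[of B3 ?B] by blast
      qed
      have "v = scl (1/lam) (p + q)" using v False unfolding p_def q_def by simp
      then show ?thesis using pB qB by (metis V.span_add V.span_scale)
    qed
  qed
  then show "\<exists>B. finite B \<and> (\<Union>lam \<in> {lam. cmod lam \<le> C}. eigvecs scl UNIV (dbar_laplacian dbar dadj) lam) \<subseteq> V.span B"
    using Bh(1) B2(1) B3(1) by (meson finite_UnI)
qed

end

theorem corollary3p6:
  fixes scl :: "complex \<Rightarrow> 'v::ab_group_add \<Rightarrow> 'v"
    and ip :: "'v \<Rightarrow> 'v \<Rightarrow> complex"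
    and n :: nat and Om :: "nat \<Rightarrow> 'v set"
    and dbar dadj :: "'v \<Rightarrow> 'v"
  assumes herm: "dbar_hermitian_complex scl ip n Om dbar dadj"
    and diag_lap: "diagonalisable_on scl UNIV (dbar_laplacian dbar dadj)"
    and diag_dd: "diagonalisable_on scl (range dbar) (dbar \<circ> dadj)"
    and diag_ddag: "diagonalisable_on scl (range dadj) (dadj \<circ> dbar)"
    and cohom: "\<forall>k. cohom_fin_dim scl Om dbar k"
  shows "(spec_to_infinity scl UNIV (dbar_laplacian dbar dadj)
            \<longleftrightarrow> spec_to_infinity scl (range dbar) (dbar \<circ> dadj))
       \<and> (spec_to_infinity scl (range dbar) (dbar \<circ> dadj)
            \<longleftrightarrow> spec_to_infinity scl (range dadj) (dadj \<circ> dbar))"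
proof (intro conjI iffI)
  assume "spec_to_infinity scl UNIV (dbar_laplacian dbar dadj)"
  then show "spec_to_infinity scl (range dbar) (dbar \<circ> dadj)" by (rule imp12[OF herm])
next
  assume "spec_to_infinity scl (range dbar) (dbar \<circ> dadj)"
  then show "spec_to_infinity scl (range dadj) (dadj \<circ> dbar)" by (rule imp23[OF herm])
next
  assume "spec_to_infinity scl (range dadj) (dadj \<circ> dbar)"
  then show "spec_to_infinity scl (range dbar) (dbar \<circ> dadj)" by (rule imp32[OF herm])
next
  assume a: "spec_to_infinity scl (range dbar) (dbar \<circ> dadj)"
  show "spec_to_infinity scl UNIV (dbar_laplacian dbar dadj)"
    by (rule imp231[OF herm diag_lap cohom a imp23[OF herm a]])
qed

end
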